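(* Let $T\in\mathbb{N}$, let $\mathbf{x}$ be a configuration and let $A(\mathbf{x},\cdot):[T]\to[0,1]$ satisfy the concavity assumption. For any $t\in[T]$, let $H^{(\mathbf{x})}=(A(\mathbf{x},1),\dots,A(\mathbf{x},t))$. Then $\textsc{Pred}(H^{(\mathbf{x})})\ge A(\mathbf{x},T)$.
   Context: $[T]=\{1,\dots,T\}$. Concavity assumption: for all $b\in\{2,\dots,T-1\}$, $A(\mathbf{x},b+1)-A(\mathbf{x},b)\le A(\mathbf{x},b)-A(\mathbf{x},b-1)$. For a finite sequence $H=(H_1,\dots,H_m)$, $\textsc{Pred}(H)$ is defined as follows: if $m=1$ return $+\infty$; otherwise, with $t_2=m$, $t_1=m-1$, $a_1=H_{t_1}$, $a_2=H_{t_2}$, return $a_2+(a_2-a_1)(T-t_2)$. *)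

theory Defs
  imports "HOL-Analysis.Analysis" "HOL-Library.Extended_Real"
begin

text \<open>Pred on a finite sequence H = (H_1,...,H_m), stored as a list (H_i = H ! (i-1)).
  If m = 1 return +infinity; otherwise with t2 = m, t1 = m-1,
  return a2 + (a2 - a1) * (T - t2).\<close>
definition Pred :: "nat \<Rightarrow> real list \<Rightarrow> ereal" where
  "Pred T H = (if length H = 1 then \<infinity>
     else (let m = length H; a1 = H ! (m - 2); a2 = H ! (m - 1)
           in ereal (a2 + (a2 - a1) * (real T - real m))))"

definition concave_on_T :: "nat \<Rightarrow> (nat \<Rightarrow> real) \<Rightarrow> bool" where
  "concave_on_T T f \<longleftrightarrow> (\<forall>b\<in>{2..T-1}. f (b+1) - f b \<le> f b - f (b-1))"

end

theory Submission
  imports Defs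
begin

lemma dmono:
  assumes conc: "concave_on_T T f" and "1 \<le> i"
  shows "i + k + 1 \<le> T \<Longrightarrow> f (i+k+1) - f (i+k) \<le> f (i+1) - f i"
proof (induction k)
  case 0 then show ?case by simp
next
  case (Suc k)
  have b: "i + k + 1 \<in> {2..T-1}" using Suc.prems assms(2) by auto
  have "f (i+k+1+1) - f (i+k+1) \<le> f (i+k+1) - f (i+k+1-1)"
    using conc b unfolding concave_on_T_def by blast
  then show ?case using Suc by simp
qed

lemma growth:
  assumes conc: "concave_on_T T f" and "2 \<le> t"
  shows "t + k \<le> T \<Longrightarrow> f (t+k) \<le> f t + real k * (f t - f (t-1))"
proof (induction k)
  case 0 then show ?case by simp
next
  case (Suc k)
  have "f (t-1+k+1) - f (t-1+k) \<le> f (t-1+1) - f (t-1)"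
    using dmono[OF conc, of "t-1" k] Suc.prems assms(2) by simp
  moreover have "t-1+k+1 = t+k" "t-1+k = t+k-1" "t-1+1 = t" using assms(2) by auto
  ultimately have d: "f (t+k+1) - f (t+k) \<le> f t - f (t-1)"
    using dmono[OF conc, of "t-1" "Suc k"] Suc.prems assms(2) by simp
  have "f (t+k) \<le> f t + real k * (f t - f (t-1))" using Suc by simp
  then show ?case using d by (simp add: algebra_simps)
qed

theorem lemma5:
  fixes T :: nat and A :: "'x \<Rightarrow> nat \<Rightarrow> real" and x :: 'x and t :: nat
  assumes range: "\<forall>b\<in>{1..T}. A x b \<in> {0..1}"
    and conc: "concave_on_T T (A x)"
    and t: "t \<in> {1..T}"
  shows "Pred T (map (A x) [1..<t+1]) \<ge> ereal (A x T)"
proof (cases "t = 1")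
  case True then show ?thesis by (simp add: Pred_def)
next
  case False
  hence t2: "2 \<le> t" using t by auto
  have g: "A x (t + (T-t)) \<le> A x t + real (T-t) * (A x t - A x (t-1))"
    using growth[OF conc t2, of "T-t"] t by simp
  have e: "t + (T-t) = T" using t by auto
  have l1: "map (A x) [1..<t+1] ! (t-2) = A x (t-1)" using t2 by (simp del: upt_Suc add: nth_upt Suc_diff_Suc numeral_2_eq_2)
  have l2: "map (A x) [1..<t+1] ! (t-1) = A x t" using t2 by (simp del: upt_Suc add: nth_upt Suc_diff_Suc numeral_2_eq_2)
  have len: "length (map (A x) [1..<t+1]) = t" by simp
  have "A x T \<le> A x t + (A x t - A x (t-1)) * (real T - real t)"
    using g e t by (simp add: of_nat_diff algebra_simps)
  then show ?thesis using False unfolding Pred_def Let_def len l1 l2 by simp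
qed

end
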